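(* Let $(A,\mathcal{A})$, $(B,\mathcal{B})$ be measurable spaces and $j:A\times B\to\mathbb{R}$ a measurable mapping. Let $(\mathfrak{a},\mathfrak{b})$ be an $A\times B$-valued random variable. If $\sigma(j(\mathfrak{a},\mathfrak{b}),\mathfrak{a})$ is independent of $\mathfrak{b}$, then $j(\mathfrak{a},\mathfrak{b})$ is $\sigma(\mathfrak{a})$-measurable. *)

theory Defs
  imports "HOL-Probability.Probability"
begin

definition sigma_rv_aug :: "'w measure \<Rightarrow> ('w \<Rightarrow> 'x) \<Rightarrow> 'x measure \<Rightarrow> 'w measure" where
  "sigma_rv_aug M X MX =
     sigma (space M) (sets (vimage_algebra (space M) X MX) \<union> null_sets M)"

end

theory Submission
  imports Defs
begin

theorem lemma6p1:
  fixes M :: "'w measure" and MA :: "'a measure" and MB :: "'b measure"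
    and j :: "'a \<times> 'b \<Rightarrow> real" and a :: "'w \<Rightarrow> 'a" and b :: "'w \<Rightarrow> 'b"
  assumes "prob_space M"
    and "j \<in> borel_measurable (MA \<Otimes>\<^sub>M MB)"
    and "(\<lambda>\<omega>. (a \<omega>, b \<omega>)) \<in> measurable M (MA \<Otimes>\<^sub>M MB)"
    and "prob_space.indep_set M
           (sets (vimage_algebra (space M) (\<lambda>\<omega>. (j (a \<omega>, b \<omega>), a \<omega>)) (borel \<Otimes>\<^sub>M MA)))
           (sets (vimage_algebra (space M) b MB))"
  shows "(\<lambda>\<omega>. j (a \<omega>, b \<omega>)) \<in> borel_measurable (sigma_rv_aug M a MA)"
proof -
  interpret prob_space M by fact
  note jm[measurable] = assms(2)
  note abm[measurable] = assms(3)
  have am[measurable]: "a \<in> measurable M MA" and bm[measurable]: "b \<in> measurable M MB"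
    using abm by (auto simp: measurable_pair_iff o_def)
  define X where "X = (\<lambda>\<omega>. j (a \<omega>, b \<omega>))"
  have Xm[measurable]: "X \<in> borel_measurable M" unfolding X_def by measurable
  define F where "F = vimage_algebra (space M) a MA"
  define G where "G = vimage_algebra (space M) (\<lambda>\<omega>. (X \<omega>, a \<omega>)) (borel \<Otimes>\<^sub>M MA)"
  have XAm: "(\<lambda>\<omega>. (X \<omega>, a \<omega>)) \<in> measurable M (borel \<Otimes>\<^sub>M MA)" by measurable
  have setsF: "sets F = {a -` A \<inter> space M | A. A \<in> sets MA}"
    unfolding F_def by (rule sets_vimage_algebra2) (use am in \<open>auto simp: measurable_def\<close>)
  have setsG: "sets G = {(\<lambda>\<omega>. (X \<omega>, a \<omega>)) -` A \<inter> space M | A. A \<in> sets (borel \<Otimes>\<^sub>M MA)}"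
    unfolding G_def by (rule sets_vimage_algebra2) (use XAm in \<open>auto simp: measurable_def\<close>)
  have indep: "prob (g \<inter> (b -` B0 \<inter> space M)) = prob g * prob (b -` B0 \<inter> space M)"
    if "g \<in> sets G" "B0 \<in> sets MB" for g B0
  proof -
    have "b -` B0 \<inter> space M \<in> sets (vimage_algebra (space M) b MB)"
      using that(2) by (rule in_vimage_algebra)
    then show ?thesis using assms(4) that(1) unfolding indep_sets2_eq G_def X_def by blast
  qed
  have FG: "sets F \<subseteq> sets G"
  proof
    fix A assume "A \<in> sets F"
    then obtain A0 where A0: "A0 \<in> sets MA" "A = a -` A0 \<inter> space M" using setsF by auto
    have "A = (\<lambda>\<omega>. (X \<omega>, a \<omega>)) -` (space borel \<times> A0) \<inter> space M" using A0 by auto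
    moreover have "space borel \<times> A0 \<in> sets (borel \<Otimes>\<^sub>M MA)" using A0 by auto
    ultimately show "A \<in> sets G" using setsG by blast
  qed
  have subalg: "subalgebra M F"
    unfolding subalgebra_def using setsF by (auto simp: F_def)
  interpret finite_measure_subalgebra M F
    by unfold_locales (fact subalg)

  have Fsub: "A \<in> sets M" if "A \<in> sets F" for A using subalg that unfolding subalgebra_def by auto
  have main: "\<exists>F0\<in>sets F. E - F0 \<in> null_sets M \<and> F0 - E \<in> null_sets M"
    if S: "S \<in> sets borel" and E: "E = X -` S \<inter> space M" for S E
  proof -
    have Em[measurable]: "E \<in> sets M" using S E by (simp add: measurable_sets)
    define h where "h = nn_cond_exp M F (indicator E)"
    have hF[measurable]: "h \<in> borel_measurable F" unfolding h_def by simp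
    have hM[measurable]: "h \<in> borel_measurable M" unfolding h_def by simp
    have constB: "AE x in M. ennreal (prob (b -` B0 \<inter> space M)) = nn_cond_exp M F (indicator (b -` B0 \<inter> space M)) x"
      if B0: "B0 \<in> sets MB" for B0
    proof (rule nn_cond_exp_charact)
      fix A assume A: "A \<in> sets F"
      have AM: "A \<in> sets M" using A Fsub by auto
      have BM: "b -` B0 \<inter> space M \<in> sets M" using B0 by (simp add: measurable_sets)
      have cst: "(\<integral>\<^sup>+ x \<in> A. ennreal (prob (b -` B0 \<inter> space M)) \<partial>M) = ennreal (prob A * prob (b -` B0 \<inter> space M))"
        by (subst nn_integral_cmult_indicator[OF AM]) (simp add: emeasure_eq_measure ennreal_mult mult.commute)
      have "(\<integral>\<^sup>+ x \<in> A. indicator (b -` B0 \<inter> space M) x \<partial>M) = (\<integral>\<^sup>+ x. indicator (A \<inter> (b -` B0 \<inter> space M)) x \<partial>M)"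
        by (rule nn_integral_cong) (auto split: split_indicator)
      also have "\<dots> = emeasure M (A \<inter> (b -` B0 \<inter> space M))"
        using AM BM by (intro nn_integral_indicator) auto
      also have "\<dots> = ennreal (prob A * prob (b -` B0 \<inter> space M))"
        using indep[OF _ B0, of A] FG A AM BM by (auto simp: emeasure_eq_measure)
      also have "\<dots> = (\<integral>\<^sup>+ x \<in> A. ennreal (prob (b -` B0 \<inter> space M)) \<partial>M)"
        using cst by simp
      finally show "(\<integral>\<^sup>+ x \<in> A. indicator (b -` B0 \<inter> space M) x \<partial>M) = (\<integral>\<^sup>+ x \<in> A. ennreal (prob (b -` B0 \<inter> space M)) \<partial>M)" .
    qed (use B0 in auto)
    define ab where "ab = (\<lambda>\<omega>. (a \<omega>, b \<omega>))"
    have abm'[measurable]: "ab \<in> measurable M (MA \<Otimes>\<^sub>M MB)" unfolding ab_def by (rule abm)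
    have key: "(\<integral>\<^sup>+ x. indicator E x * indicator (a -` A0 \<inter> space M \<inter> (b -` B0 \<inter> space M)) x \<partial>M)
        = ennreal (prob (a -` A0 \<inter> space M \<inter> E) * prob (b -` B0 \<inter> space M))
      \<and> (\<integral>\<^sup>+ x. h x * indicator (a -` A0 \<inter> space M \<inter> (b -` B0 \<inter> space M)) x \<partial>M)
        = ennreal (prob (a -` A0 \<inter> space M \<inter> E) * prob (b -` B0 \<inter> space M))"
      if A0: "A0 \<in> sets MA" and B0: "B0 \<in> sets MB" for A0 B0
    proof
      define Aw where "Aw = a -` A0 \<inter> space M"
      define Bw where "Bw = b -` B0 \<inter> space M"
      have AwF: "Aw \<in> sets F" unfolding Aw_def F_def using A0 by (rule in_vimage_algebra)
      have AwM[measurable]: "Aw \<in> sets M" using AwF Fsub by auto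
      have BwM[measurable]: "Bw \<in> sets M" unfolding Bw_def using B0 by (simp add: measurable_sets)
      have AEG: "Aw \<inter> E \<in> sets G"
      proof -
        have "Aw \<inter> E = (\<lambda>\<omega>. (X \<omega>, a \<omega>)) -` (S \<times> A0) \<inter> space M" unfolding Aw_def E by auto
        moreover have "S \<times> A0 \<in> sets (borel \<Otimes>\<^sub>M MA)" using S A0 by auto
        ultimately show ?thesis using setsG by blast
      qed
      have val: "ennreal (prob (Aw \<inter> E) * prob Bw) = emeasure M (Aw \<inter> E \<inter> Bw)"
        using indep[OF AEG B0] by (simp add: Bw_def[symmetric] emeasure_eq_measure)
      have "(\<integral>\<^sup>+ x. indicator E x * indicator (Aw \<inter> Bw) x \<partial>M) = (\<integral>\<^sup>+ x. indicator (Aw \<inter> E \<inter> Bw) x \<partial>M)"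
        by (rule nn_integral_cong) (auto split: split_indicator)
      also have "\<dots> = emeasure M (Aw \<inter> E \<inter> Bw)" by (intro nn_integral_indicator) auto
      finally show "(\<integral>\<^sup>+ x. indicator E x * indicator (a -` A0 \<inter> space M \<inter> (b -` B0 \<inter> space M)) x \<partial>M)
        = ennreal (prob (a -` A0 \<inter> space M \<inter> E) * prob (b -` B0 \<inter> space M))"
        using val unfolding Aw_def Bw_def by simp
      have fF[measurable]: "(\<lambda>x. indicator Aw x * h x) \<in> borel_measurable F"
        using AwF hF by measurable
      have "(\<integral>\<^sup>+ x. h x * indicator (Aw \<inter> Bw) x \<partial>M) = (\<integral>\<^sup>+ x. (indicator Aw x * h x) * indicator Bw x \<partial>M)"
        by (rule nn_integral_cong) (auto split: split_indicator)
      also have "\<dots> = (\<integral>\<^sup>+ x. (indicator Aw x * h x) * nn_cond_exp M F (indicator Bw) x \<partial>M)"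
        by (rule nn_cond_exp_intg[symmetric]) auto
      also have "\<dots> = (\<integral>\<^sup>+ x. (indicator Aw x * h x) * ennreal (prob Bw) \<partial>M)"
        apply (rule nn_integral_cong_AE)
        using constB[OF B0] unfolding Bw_def[symmetric] by (auto elim!: AE_mp)
      also have "\<dots> = (\<integral>\<^sup>+ x. indicator Aw x * h x \<partial>M) * ennreal (prob Bw)"
        by (rule nn_integral_multc) auto
      also have "(\<integral>\<^sup>+ x. indicator Aw x * h x \<partial>M) = (\<integral>\<^sup>+ x. indicator Aw x * indicator E x \<partial>M)"
        unfolding h_def by (rule nn_cond_exp_intg) (use AwF in auto)
      also have "(\<integral>\<^sup>+ x. indicator Aw x * indicator E x \<partial>M) = emeasure M (Aw \<inter> E)"
        unfolding indicator_inter_arith[symmetric] using AwM Em by (intro nn_integral_indicator) auto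
      finally show "(\<integral>\<^sup>+ x. h x * indicator (a -` A0 \<inter> space M \<inter> (b -` B0 \<inter> space M)) x \<partial>M)
        = ennreal (prob (a -` A0 \<inter> space M \<inter> E) * prob (b -` B0 \<inter> space M))"
        unfolding Aw_def Bw_def by (simp add: emeasure_eq_measure ennreal_mult)
    qed
    have emN: "emeasure (distr (density M g) (MA \<Otimes>\<^sub>M MB) ab) C = (\<integral>\<^sup>+ x. g x * indicator (ab -` C \<inter> space M) x \<partial>M)"
      if [measurable]: "g \<in> borel_measurable M" and C: "C \<in> sets (MA \<Otimes>\<^sub>M MB)" for g C
    proof -
      have "ab \<in> measurable (density M g) (MA \<Otimes>\<^sub>M MB)" by simp
      then have "emeasure (distr (density M g) (MA \<Otimes>\<^sub>M MB) ab) C = emeasure (density M g) (ab -` C \<inter> space M)"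
        using C by (simp add: emeasure_distr)
      also have "\<dots> = (\<integral>\<^sup>+ x. g x * indicator (ab -` C \<inter> space M) x \<partial>M)"
        using C by (intro emeasure_density) (auto simp: measurable_sets)
      finally show ?thesis .
    qed
    have Neq: "distr (density M (indicator E)) (MA \<Otimes>\<^sub>M MB) ab = distr (density M h) (MA \<Otimes>\<^sub>M MB) ab"
    proof (rule measure_eqI_generator_eq[OF Int_stable_pair_measure_generator[of MA MB],
          where \<Omega>="space MA \<times> space MB" and A="\<lambda>_. space MA \<times> space MB"])
      show "{A0 \<times> B0 |A0 B0. A0 \<in> sets MA \<and> B0 \<in> sets MB} \<subseteq> Pow (space MA \<times> space MB)"
        using sets.sets_into_space[of _ MA] sets.sets_into_space[of _ MB] by blast
      show "sets (distr (density M (indicator E)) (MA \<Otimes>\<^sub>M MB) ab) = sigma_sets (space MA \<times> space MB) {A0 \<times> B0 |A0 B0. A0 \<in> sets MA \<and> B0 \<in> sets MB}"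
        by (simp add: sets_pair_measure)
      show "sets (distr (density M h) (MA \<Otimes>\<^sub>M MB) ab) = sigma_sets (space MA \<times> space MB) {A0 \<times> B0 |A0 B0. A0 \<in> sets MA \<and> B0 \<in> sets MB}"
        by (simp add: sets_pair_measure)
      show "range (\<lambda>_. space MA \<times> space MB) \<subseteq> {A0 \<times> B0 |A0 B0. A0 \<in> sets MA \<and> B0 \<in> sets MB}"
        by blast
      show "(\<Union>i::nat. space MA \<times> space MB) = space MA \<times> space MB" by simp
    next
      fix X0 assume "X0 \<in> {A0 \<times> B0 |A0 B0. A0 \<in> sets MA \<and> B0 \<in> sets MB}"
      then obtain A0 B0 where AB: "A0 \<in> sets MA" "B0 \<in> sets MB" "X0 = A0 \<times> B0" by auto
      have pre: "ab -` X0 \<inter> space M = a -` A0 \<inter> space M \<inter> (b -` B0 \<inter> space M)"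
        unfolding ab_def AB(3) by auto
      have X0s: "X0 \<in> sets (MA \<Otimes>\<^sub>M MB)" using AB by auto
      have e1: "emeasure (distr (density M (indicator E)) (MA \<Otimes>\<^sub>M MB) ab) X0 = (\<integral>\<^sup>+ x. indicator E x * indicator (ab -` X0 \<inter> space M) x \<partial>M)"
        by (rule emN) (use X0s in auto)
      have e2: "emeasure (distr (density M h) (MA \<Otimes>\<^sub>M MB) ab) X0 = (\<integral>\<^sup>+ x. h x * indicator (ab -` X0 \<inter> space M) x \<partial>M)"
        by (rule emN) (use X0s in auto)
      show "emeasure (distr (density M (indicator E)) (MA \<Otimes>\<^sub>M MB) ab) X0 = emeasure (distr (density M h) (MA \<Otimes>\<^sub>M MB) ab) X0"
        unfolding e1 e2 pre using key[OF AB(1,2)] by (simp only:)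
    next
      fix i :: nat
      have X0s: "space MA \<times> space MB \<in> sets (MA \<Otimes>\<^sub>M MB)"
        by (rule pair_measureI) auto
      have pre: "ab -` (space MA \<times> space MB) \<inter> space M = a -` space MA \<inter> space M \<inter> (b -` space MB \<inter> space M)"
        unfolding ab_def by auto
      have e1: "emeasure (distr (density M (indicator E)) (MA \<Otimes>\<^sub>M MB) ab) (space MA \<times> space MB) = (\<integral>\<^sup>+ x. indicator E x * indicator (ab -` (space MA \<times> space MB) \<inter> space M) x \<partial>M)"
        by (rule emN) (use X0s in auto)
      show "emeasure (distr (density M (indicator E)) (MA \<Otimes>\<^sub>M MB) ab) (space MA \<times> space MB) \<noteq> \<infinity>"
        unfolding e1 pre using key[OF sets.top sets.top, THEN conjunct1] by (simp only: infinity_ennreal_def ennreal_neq_top not_False_eq_True)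
    qed
    define D where "D = {p \<in> space (MA \<Otimes>\<^sub>M MB). j p \<in> S}"
    have Ds: "D \<in> sets (MA \<Otimes>\<^sub>M MB)" unfolding D_def using S by measurable
    have Dcs: "space (MA \<Otimes>\<^sub>M MB) - D \<in> sets (MA \<Otimes>\<^sub>M MB)" using Ds by auto
    have abspace: "ab \<omega> \<in> space (MA \<Otimes>\<^sub>M MB)" if "\<omega> \<in> space M" for \<omega>
      using measurable_space[OF abm' that] .
    have preD: "ab -` D \<inter> space M = E" unfolding D_def E X_def ab_def using abspace[unfolded ab_def] by auto
    have preDc: "ab -` (space (MA \<Otimes>\<^sub>M MB) - D) \<inter> space M = space M - E"
      unfolding D_def E X_def ab_def using abspace[unfolded ab_def] by auto
    have eqC: "(\<integral>\<^sup>+ x. indicator E x * indicator (ab -` C \<inter> space M) x \<partial>M) = (\<integral>\<^sup>+ x. h x * indicator (ab -` C \<inter> space M) x \<partial>M)"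
      if C: "C \<in> sets (MA \<Otimes>\<^sub>M MB)" for C
    proof -
      have "(\<integral>\<^sup>+ x. indicator E x * indicator (ab -` C \<inter> space M) x \<partial>M) = emeasure (distr (density M (indicator E)) (MA \<Otimes>\<^sub>M MB) ab) C"
        by (rule emN[symmetric]) (use C in auto)
      also have "\<dots> = emeasure (distr (density M h) (MA \<Otimes>\<^sub>M MB) ab) C" by (simp only: Neq)
      also have "\<dots> = (\<integral>\<^sup>+ x. h x * indicator (ab -` C \<inter> space M) x \<partial>M)"
        by (rule emN) (use C in auto)
      finally show ?thesis .
    qed
    have eq1: "(\<integral>\<^sup>+ x. indicator E x * indicator E x \<partial>M) = (\<integral>\<^sup>+ x. h x * indicator E x \<partial>M)"
      using eqC[OF Ds] unfolding preD .
    have eq2: "(\<integral>\<^sup>+ x. indicator E x * indicator (space M - E) x \<partial>M) = (\<integral>\<^sup>+ x. h x * indicator (space M - E) x \<partial>M)"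
      using eqC[OF Dcs] unfolding preDc .
    have "(\<integral>\<^sup>+ x. h x * indicator (space M - E) x \<partial>M) = 0"
      unfolding eq2[symmetric] by (subst nn_integral_cong[where v="\<lambda>_. 0"]) (auto split: split_indicator)
    then have "AE x in M. h x * indicator (space M - E) x = 0"
      by (subst (asm) nn_integral_0_iff_AE) auto
    then have h0: "AE x in M. x \<notin> E \<longrightarrow> h x = 0"
      by (rule AE_mp) (auto intro!: AE_I2 simp: indicator_def)
    have "AE x in M. h x \<le> nn_cond_exp M F (\<lambda>_. 1) x"
      unfolding h_def by (rule nn_cond_exp_mono) (auto split: split_indicator)
    moreover have "AE x in M. (\<lambda>_. 1::ennreal) x = nn_cond_exp M F (\<lambda>_. 1) x"
      by (rule nn_cond_exp_F_meas) simp
    ultimately have hle: "AE x in M. h x \<le> 1" by eventually_elim simp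
    have EE: "(\<integral>\<^sup>+ x. indicator E x * indicator E x \<partial>M) = emeasure M E"
      by (subst nn_integral_indicator[OF Em, symmetric]) (rule nn_integral_cong, simp split: split_indicator)
    have fin: "emeasure M E \<noteq> \<infinity>" by (simp add: emeasure_eq_measure)
    have sum: "(\<integral>\<^sup>+ x. (1 - h x) * indicator E x \<partial>M) + (\<integral>\<^sup>+ x. h x * indicator E x \<partial>M)
             = (\<integral>\<^sup>+ x. indicator E x * indicator E x \<partial>M)"
    proof -
      have "(\<integral>\<^sup>+ x. (1 - h x) * indicator E x \<partial>M) + (\<integral>\<^sup>+ x. h x * indicator E x \<partial>M)
          = (\<integral>\<^sup>+ x. (1 - h x) * indicator E x + h x * indicator E x \<partial>M)"
        by (rule nn_integral_add[symmetric]) auto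
      also have "\<dots> = (\<integral>\<^sup>+ x. indicator E x * indicator E x \<partial>M)"
        apply (rule nn_integral_cong_AE)
        using hle apply eventually_elim
        by (auto simp: indicator_def diff_add_cancel_ennreal)
      finally show ?thesis .
    qed
    have "(\<integral>\<^sup>+ x. (1 - h x) * indicator E x \<partial>M) = 0"
    proof -
      have "(\<integral>\<^sup>+ x. (1 - h x) * indicator E x \<partial>M) + emeasure M E = emeasure M E"
        using sum unfolding eq1[symmetric] EE .
      then have "emeasure M E + (\<integral>\<^sup>+ x. (1 - h x) * indicator E x \<partial>M) = emeasure M E + 0"
        by (simp add: add.commute)
      then show ?thesis using fin by (simp only: ennreal_add_left_cancel) simp
    qed
    then have "AE x in M. (1 - h x) * indicator E x = 0"
      by (subst (asm) nn_integral_0_iff_AE) auto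
    then have h1: "AE x in M. x \<in> E \<longrightarrow> 1 \<le> h x"
      by eventually_elim (auto simp: indicator_def dest: ennreal_minus_eq_0)
    have hE: "AE x in M. h x = indicator E x"
      using h0 h1 hle by eventually_elim (auto simp: indicator_def)
    define F0 where "F0 = {x \<in> space M. h x = 1}"
    have F0F: "F0 \<in> sets F"
    proof -
      have "{x \<in> space F. h x = 1} \<in> sets F" by measurable
      then show ?thesis unfolding F0_def F_def by simp
    qed
    have F0M: "F0 \<in> sets M" using F0F Fsub by auto
    have Nn: "{x \<in> space M. \<not> h x = indicator E x} \<in> null_sets M"
      using hE by (subst (asm) AE_iff_null) auto
    have "E - F0 \<in> null_sets M"
      by (rule null_sets_subset[OF Nn]) (use Em F0M F0_def E in \<open>auto simp: indicator_def\<close>)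
    moreover have "F0 - E \<in> null_sets M"
      by (rule null_sets_subset[OF Nn]) (use Em F0M F0_def E in \<open>auto simp: indicator_def\<close>)
    ultimately show ?thesis using F0F by blast
  qed
  have gen: "sets F \<union> null_sets M \<subseteq> Pow (space M)"
    using sets.sets_into_space[of _ F] sets.sets_into_space[of _ M] Fsub by auto
  have sp: "space (sigma_rv_aug M a MA) = space M"
    unfolding sigma_rv_aug_def by (simp add: space_measure_of_conv)
  have setsS: "sets (sigma_rv_aug M a MA) = sigma_sets (space M) (sets F \<union> null_sets M)"
    unfolding sigma_rv_aug_def F_def[symmetric] using gen by (simp add: sets_measure_of)
  have inS: "A \<in> sets (sigma_rv_aug M a MA)" if "A \<in> sets F \<union> null_sets M" for A
    unfolding setsS using that by (rule sigma_sets.Basic)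
  show ?thesis
  proof (rule borel_measurableI)
    fix S :: "real set" assume "open S"
    then have S: "S \<in> sets borel" by simp
    define E where "E = X -` S \<inter> space M"
    obtain F0 where F0: "F0 \<in> sets F" "E - F0 \<in> null_sets M" "F0 - E \<in> null_sets M"
      using main[OF S E_def] by blast
    have "E = (F0 \<union> (E - F0)) - (F0 - E)" by blast
    moreover have "(F0 \<union> (E - F0)) - (F0 - E) \<in> sets (sigma_rv_aug M a MA)"
    proof -
      have 1: "F0 \<in> sets (sigma_rv_aug M a MA)" using F0 inS by blast
      have 2: "E - F0 \<in> sets (sigma_rv_aug M a MA)" using F0 inS by blast
      have 3: "F0 - E \<in> sets (sigma_rv_aug M a MA)" using F0 inS by blast
      show ?thesis by (rule sets.Diff[OF sets.Un[OF 1 2] 3])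
    qed
    ultimately show "(\<lambda>\<omega>. j (a \<omega>, b \<omega>)) -` S \<inter> space (sigma_rv_aug M a MA) \<in> sets (sigma_rv_aug M a MA)"
      unfolding sp E_def X_def by simp
  qed
qed

end
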